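(* Let $\mathcal H$ be a finite-dimensional Hilbert space and let $|\psi\rangle\in(\mathbb{C}^2)^{\otimes n}\otimes\mathcal H$ be a unit vector of the form \[ |\psi\rangle=\big(\alpha|0^n\rangle+\delta|v_1\rangle+\beta|v_{\ge2}\rangle\big)\otimes|g\rangle+\gamma|\perp\rangle, \] where $\alpha,\beta,\delta,\gamma$ are nonnegative reals; $|v_1\rangle,|v_{\ge2}\rangle\in(\mathbb{C}^2)^{\otimes n}$, $|g\rangle\in\mathcal H$ and $|\perp\rangle$ are unit vectors; $|v_1\rangle$ is supported only on computational basis strings of Hamming weight $1$; $|v_{\ge2}\rangle$ is supported only on strings of Hamming weight at least $2$; and $|\perp\rangle$ is orthogonal to every vector of the form $|0^n\rangle\otimes|h\rangle$ ($|h\rangle\in\mathcal H$) and to every vector of the form $|x\rangle\otimes|g\rangle$ ($|x\rangle\in(\mathbb{C}^2)^{\otimes n}$). Suppose $\alpha^2=2/3+c$ with $c\ge0$. Then for every pure product state $|\pi\rangle=|\pi_1\rangle\otimes\cdots\otimes|\pi_n\rangle$ on $n$ qubits, \[ \big\|(\langle\pi|\otimes I)|\psi\rangle\big\|_2^2\le\Big(\alpha+\min\Big\{\delta,\sqrt{\tfrac{2}{27}}\,\tfrac{\delta^2}{c}\Big\}\Big)^2, \] where for $c=0$ the minimum is interpreted as $\delta$.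
   Context: $|0^n\rangle$ is the all-zeros computational basis state of $n$ qubits; $I$ is the identity on $\mathcal H$. *)

theory Defs
  imports Complex_Main
begin

text \<open>Computational basis strings of n qubits are bool lists of length n.
  Vectors of (C^2)^{tensor n} are functions on bool lists supported on length-n lists;
  the finite-dimensional Hilbert space H is C^'h for a finite type 'h (standard inner product);
  vectors of (C^2)^{tensor n} (x) H are functions bool list => 'h => complex.\<close>

definition strs :: "nat \<Rightarrow> bool list set" where
  "strs n = {xs. length xs = n}"

definition hamming_weight :: "bool list \<Rightarrow> nat" where
  "hamming_weight xs = length (filter id xs)"

definition qsupp :: "nat \<Rightarrow> (bool list \<Rightarrow> complex) \<Rightarrow> bool" where
  "qsupp n v \<longleftrightarrow> (\<forall>xs. v xs \<noteq> 0 \<longrightarrow> length xs = n)"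

definition jsupp :: "nat \<Rightarrow> (bool list \<Rightarrow> 'h \<Rightarrow> complex) \<Rightarrow> bool" where
  "jsupp n v \<longleftrightarrow> (\<forall>xs i. v xs i \<noteq> 0 \<longrightarrow> length xs = n)"

definition ip_q :: "nat \<Rightarrow> (bool list \<Rightarrow> complex) \<Rightarrow> (bool list \<Rightarrow> complex) \<Rightarrow> complex" where
  "ip_q n u v = (\<Sum>xs\<in>strs n. cnj (u xs) * v xs)"

definition ip_h :: "('h::finite \<Rightarrow> complex) \<Rightarrow> ('h \<Rightarrow> complex) \<Rightarrow> complex" where
  "ip_h u v = (\<Sum>i\<in>UNIV. cnj (u i) * v i)"

definition ip_j :: "nat \<Rightarrow> (bool list \<Rightarrow> 'h::finite \<Rightarrow> complex) \<Rightarrow> (bool list \<Rightarrow> 'h \<Rightarrow> complex) \<Rightarrow> complex" where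
  "ip_j n u v = (\<Sum>xs\<in>strs n. \<Sum>i\<in>UNIV. cnj (u xs i) * v xs i)"

definition tensor :: "(bool list \<Rightarrow> complex) \<Rightarrow> ('h \<Rightarrow> complex) \<Rightarrow> (bool list \<Rightarrow> 'h \<Rightarrow> complex)" where
  "tensor v g = (\<lambda>xs i. v xs * g i)"

definition ket0 :: "nat \<Rightarrow> bool list \<Rightarrow> complex" where
  "ket0 n = (\<lambda>xs. if xs = replicate n False then 1 else 0)"

definition prod_state :: "nat \<Rightarrow> (nat \<Rightarrow> bool \<Rightarrow> complex) \<Rightarrow> bool list \<Rightarrow> complex" where
  "prod_state n p = (\<lambda>xs. if length xs = n then (\<Prod>k<n. p k (xs ! k)) else 0)"

text \<open>Partial inner product (<pi| (x) I)|psi>, a vector in H.\<close>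
definition partial_bra :: "nat \<Rightarrow> (bool list \<Rightarrow> complex) \<Rightarrow> (bool list \<Rightarrow> 'h \<Rightarrow> complex) \<Rightarrow> ('h \<Rightarrow> complex)" where
  "partial_bra n p psi = (\<lambda>i. \<Sum>xs\<in>strs n. cnj (p xs) * psi xs i)"

definition hnorm2 :: "('h::finite \<Rightarrow> complex) \<Rightarrow> real" where
  "hnorm2 v = (\<Sum>i\<in>UNIV. (cmod (v i))\<^sup>2)"

end

theory Submission
  imports Defs "HOL-Analysis.Analysis"
begin


lemma main_real:
  fixes \<alpha> \<beta> \<gamma> c w0 w1 w2 k :: real
  assumes a0: "0 \<le> \<alpha>" and b0: "0\<le>\<beta>" and g0: "0\<le>\<gamma>" and bg: "\<beta>\<^sup>2+\<gamma>\<^sup>2 \<le> 1/3 - c"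
    and asq: "\<alpha>\<^sup>2 = 2/3 + c" and c0: "0 \<le> c" and w0: "0\<le>w0" and w1: "0\<le>w1" and w2: "0\<le>w2"
    and ws: "w0+w1+w2=1" and C: "w2*(2*w0-w1) \<le> w1\<^sup>2" and kdef: "k = sqrt(2/27)"
  shows "(\<alpha>* sqrt w0 + \<beta>* sqrt w2)\<^sup>2 + \<gamma>\<^sup>2*(1-w0) \<le> (\<alpha> - c*w1/(4*k))\<^sup>2"
proof -
  define \<rho> where "\<rho> = 1/3 - c"
  define u where "u = 1 - w0"
  define X where "X = sqrt u"
  define Y where "Y = sqrt w1"
  define r2 where "r2 = sqrt (2::real)"
  have u: "u = w1 + w2" using ws u_def by simp
  have u0: "0 \<le> u" using u w1 w2 by simp
  have X2: "X\<^sup>2 = u" using u0 X_def by simp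
  have Y2: "Y\<^sup>2 = w1" using w1 Y_def by simp
  have X0: "0 \<le> X" and Y0: "0 \<le> Y" using X_def Y_def u0 w1 by auto
  have XY: "Y \<le> X" unfolding X_def Y_def using u w2 by (simp add: real_sqrt_le_iff)
  have r2sq: "r2\<^sup>2 = 2" and r20: "0 \<le> r2" using r2_def by auto
  have rho0: "0 \<le> \<rho>" using bg \<rho>_def by (smt (verit) zero_le_power2)
  have s1: "(\<alpha>* sqrt w0 + \<beta>* sqrt w2)\<^sup>2 = \<alpha>\<^sup>2*w0 + 2*\<alpha>*\<beta>* sqrt (w0*w2) + \<beta>\<^sup>2*w2"
    using w0 w2 by (simp add: power2_sum power_mult_distrib real_sqrt_mult)
  have s2: "\<gamma>\<^sup>2*(1-w0) \<le> (\<rho>-\<beta>\<^sup>2)*u"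
    using bg u0 \<rho>_def u_def by (simp add: mult_right_mono)
  have s3: "w0*w2 \<le> w1*u/2" using C u by (simp add: algebra_simps power2_eq_square)
  have s4: "2* sqrt (w0*w2) \<le> r2*X*Y"
  proof -
    have "sqrt (w0*w2) \<le> sqrt (w1*u/2)" using s3 by (simp add: real_sqrt_le_iff)
    also have "2* sqrt (w1*u/2) = r2*X*Y"
    proof -
      have a: "sqrt 2 * sqrt (w1*u/2) = sqrt (w1*u)" by (simp add: real_sqrt_mult[symmetric])
      have "2* sqrt (w1*u/2) = sqrt 2 * (sqrt 2 * sqrt (w1*u/2))" by simp
      also have "\<dots> = r2*X*Y" unfolding a r2_def X_def Y_def by (simp add: real_sqrt_mult mult.commute)
      finally show ?thesis .
    qed
    finally show ?thesis by simp
  qed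
  have L1: "(\<alpha>* sqrt w0 + \<beta>* sqrt w2)\<^sup>2 + \<gamma>\<^sup>2*(1-w0) \<le> \<alpha>\<^sup>2 - (\<alpha>\<^sup>2-\<rho>)*X\<^sup>2 + r2*\<alpha>*\<beta>*X*Y - \<beta>\<^sup>2*Y\<^sup>2"
  proof -
    have "2*\<alpha>*\<beta>* sqrt (w0*w2) \<le> \<alpha>*\<beta>*(r2*X*Y)"
      using s4 mult_left_mono[OF s4, of "\<alpha>*\<beta>"] a0 b0 by (simp add: mult.assoc)
    moreover have "\<alpha>\<^sup>2*w0 + \<alpha>*\<beta>*(r2*X*Y) + \<beta>\<^sup>2*w2 + (\<rho>-\<beta>\<^sup>2)*u
       = \<alpha>\<^sup>2 - (\<alpha>\<^sup>2-\<rho>)*X\<^sup>2 + r2*\<alpha>*\<beta>*X*Y - \<beta>\<^sup>2*Y\<^sup>2"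
    proof -
      have w0e: "w0 = 1 - X\<^sup>2" using X2 u_def by simp
      have w2e: "w2 = X\<^sup>2 - Y\<^sup>2" using X2 Y2 u by simp
      show ?thesis unfolding w0e w2e X2[symmetric] by (simp add: algebra_simps)
    qed
    ultimately show ?thesis using s1 s2 by linarith
  qed
  have s6a: "r2*\<alpha>*\<beta> \<le> 2*(\<alpha>\<^sup>2-\<rho>)"
  proof -
    have "(r2*\<alpha>*\<beta>)\<^sup>2 = 2*\<alpha>\<^sup>2*\<beta>\<^sup>2" using r2sq by (simp add: power_mult_distrib)
    also have "\<dots> \<le> 2*(2/3+c)*(1/3-c)" using asq bg c0
      by (simp add: mult_left_mono) (smt (verit, best) mult_left_mono zero_le_power2)
    also have "\<dots> \<le> (2*(\<alpha>\<^sup>2-\<rho>))\<^sup>2"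
    proof -
      have ar: "\<alpha>\<^sup>2-\<rho> = 1/3+2*c" using asq \<rho>_def by simp
      have "(2*(1/3+2*c))\<^sup>2 - 2*(2/3+c)*(1/3-c) = 6*c + 18*(c*c)" by (simp add: field_simps power2_eq_square)
      moreover have "0 \<le> c*c" using c0 by simp
      ultimately show ?thesis unfolding ar using c0 by linarith
    qed
    finally have "(r2*\<alpha>*\<beta>)\<^sup>2 \<le> (2*(\<alpha>\<^sup>2-\<rho>))\<^sup>2" .
    moreover have "0 \<le> 2*(\<alpha>\<^sup>2-\<rho>)" using asq \<rho>_def c0 by simp
    ultimately show ?thesis using power2_le_imp_le by blast
  qed
  have s6: "(\<alpha>\<^sup>2-\<rho>)*X\<^sup>2 - r2*\<alpha>*\<beta>*X*Y + \<beta>\<^sup>2*Y\<^sup>2 \<ge> ((\<alpha>\<^sup>2-\<rho>) - r2*\<alpha>*\<beta> + \<beta>\<^sup>2)*Y\<^sup>2"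
  proof -
    have e: "(\<alpha>\<^sup>2-\<rho>)*X\<^sup>2 - r2*\<alpha>*\<beta>*X*Y + \<beta>\<^sup>2*Y\<^sup>2 - ((\<alpha>\<^sup>2-\<rho>) - r2*\<alpha>*\<beta> + \<beta>\<^sup>2)*Y\<^sup>2
       = (X-Y)*((\<alpha>\<^sup>2-\<rho>)*(X+Y) - r2*\<alpha>*\<beta>*Y)" by (simp add: algebra_simps power2_eq_square)
    have "r2*\<alpha>*\<beta>*Y \<le> 2*(\<alpha>\<^sup>2-\<rho>)*Y" using s6a Y0 mult_right_mono by blast
    also have "\<dots> = (\<alpha>\<^sup>2-\<rho>)*(Y+Y)" by simp
    also have "\<dots> \<le> (\<alpha>\<^sup>2-\<rho>)*(X+Y)" 
      by (rule mult_left_mono) (use XY asq \<rho>_def c0 in auto)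
    finally have "0 \<le> (X-Y)*((\<alpha>\<^sup>2-\<rho>)*(X+Y) - r2*\<alpha>*\<beta>*Y)" using XY by simp
    then show ?thesis using e by simp
  qed
  have s7: "(\<alpha>\<^sup>2-\<rho>) - r2*\<alpha>*\<beta> + \<beta>\<^sup>2 \<ge> \<alpha>\<^sup>2 - r2*\<alpha>* sqrt \<rho>"
  proof -
    have bs: "\<beta> \<le> sqrt \<rho>" using bg \<rho>_def
      by (smt (verit) real_le_rsqrt zero_le_power2)
    have "2* sqrt \<rho> \<le> r2*\<alpha>"
    proof -
      have "(2* sqrt \<rho>)\<^sup>2 \<le> (r2*\<alpha>)\<^sup>2" using rho0 r2sq asq \<rho>_def c0 by (simp add: power_mult_distrib)
      moreover have "0 \<le> r2*\<alpha>" using r20 a0 by simp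
      ultimately show ?thesis using power2_le_imp_le by blast
    qed
    then have "0 \<le> (sqrt \<rho> - \<beta>)*(r2*\<alpha> - \<beta> - sqrt \<rho>)" using bs by simp
    moreover have "(sqrt \<rho>)\<^sup>2 = \<rho>" using rho0 by simp
    ultimately show ?thesis by (simp add: algebra_simps power2_eq_square)
  qed
  have k0: "0 < k" and k2: "k\<^sup>2 = 2/27" using kdef by auto
  have s8: "c/(2*k) \<le> \<alpha> - r2* sqrt \<rho>"
  proof -
    define B where "B = r2* sqrt \<rho>"
    have B0: "0 \<le> B" using B_def r20 rho0 by simp
    have B2: "B\<^sup>2 = 2/3 - 2*c" using B_def r2sq rho0 \<rho>_def by (simp add: power_mult_distrib)
    have d: "(\<alpha>-B)*(\<alpha>+B) = 3*c" using B2 asq by (simp add: algebra_simps power2_eq_square)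
    have "(\<alpha>+B)\<^sup>2 + (\<alpha>-B)\<^sup>2 = 2*(\<alpha>\<^sup>2+B\<^sup>2)" by (simp add: power2_sum power2_diff)
    moreover have "2*(\<alpha>\<^sup>2+B\<^sup>2) = 8/3 - 2*c" by (simp add: B2 asq)
    ultimately have "(\<alpha>+B)\<^sup>2 \<le> 8/3" using c0 zero_le_power2[of "\<alpha>-B"] by linarith
    also have "8/3 = (6*k)\<^sup>2" using k2 by (simp add: power_mult_distrib)
    finally have h6: "(\<alpha>+B)\<^sup>2 \<le> (6*k)\<^sup>2" .
    have "\<alpha>+B \<le> 6*k" using power2_le_imp_le[OF h6] k0 by simp
    have "\<alpha> \<noteq> 0" using asq c0 by auto
    then have ap: "0 < \<alpha>" using a0 by simp
    have "c*(\<alpha>+B) \<le> c*(6*k)" using \<open>\<alpha>+B \<le> 6*k\<close> c0 by (simp add: mult_left_mono)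
    also have "\<dots> = 2*k*((\<alpha>-B)*(\<alpha>+B))" using d by simp
    finally have "c*(\<alpha>+B) \<le> (2*k*(\<alpha>-B))*(\<alpha>+B)" by (simp add: algebra_simps)
    moreover have "0 < \<alpha>+B" using ap B0 by simp
    ultimately have "c \<le> 2*k*(\<alpha>-B)" using mult_right_le_imp_le by blast
    then show ?thesis using k0 B_def by (simp add: divide_simps mult.commute)
  qed
  have "(\<alpha>* sqrt w0 + \<beta>* sqrt w2)\<^sup>2 + \<gamma>\<^sup>2*(1-w0) \<le> \<alpha>\<^sup>2 - (\<alpha>\<^sup>2 - r2*\<alpha>* sqrt \<rho>)*Y\<^sup>2"
    using L1 s6 s7 mult_right_mono[OF s7, of "Y\<^sup>2"] by (smt (verit) zero_le_power2)
  also have "\<dots> \<le> \<alpha>\<^sup>2 - \<alpha>*(c/(2*k))*Y\<^sup>2"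
  proof -
    have "\<alpha>*(c/(2*k)) \<le> \<alpha>*(\<alpha> - r2* sqrt \<rho>)" using s8 a0 mult_left_mono by blast
    also have "\<alpha>*(\<alpha> - r2* sqrt \<rho>) = \<alpha>\<^sup>2 - r2*\<alpha>* sqrt \<rho>" by (simp add: algebra_simps power2_eq_square)
    finally have "\<alpha>*(c/(2*k))*Y\<^sup>2 \<le> (\<alpha>\<^sup>2 - r2*\<alpha>* sqrt \<rho>)*Y\<^sup>2"
      by (rule mult_right_mono) simp
    then show ?thesis by simp
  qed
  also have "\<dots> = \<alpha>\<^sup>2 - 2*\<alpha>*(c*w1/(4*k))" using Y2 k0 by (simp add: field_simps)
  also have "\<dots> \<le> (\<alpha> - c*w1/(4*k))\<^sup>2"
    unfolding power2_diff using zero_le_power2[of "c*w1/(4*k)"] by linarith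
  finally show ?thesis .
qed

lemma final_real:
  fixes \<alpha> \<beta> \<gamma> \<delta> c w0 w1 w2 X Y :: real
  assumes a0: "0 \<le> \<alpha>" and b0: "0\<le>\<beta>" and g0: "0\<le>\<gamma>" and d0: "0\<le>\<delta>"
    and nrm: "\<alpha>\<^sup>2+\<beta>\<^sup>2+\<gamma>\<^sup>2+\<delta>\<^sup>2 = 1"
    and asq: "\<alpha>\<^sup>2 = 2/3 + c" and c0: "0 \<le> c" and w0: "0\<le>w0" and w1: "0\<le>w1" and w2: "0\<le>w2"
    and ws: "w0+w1+w2=1" and C: "w2*(2*w0-w1) \<le> w1\<^sup>2"
    and X0: "0 \<le> X" and Xb: "X \<le> \<alpha> * sqrt w0 + \<delta> * sqrt w1 + \<beta> * sqrt w2"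
    and Yb: "Y \<le> 1 - w0"
  shows "X\<^sup>2 + \<gamma>\<^sup>2*Y \<le> (\<alpha> + (if c = 0 then \<delta> else min \<delta> (sqrt (2/27) * \<delta>\<^sup>2 / c)))\<^sup>2"
proof -
  define k where "k = sqrt (2/27::real)"
  have k0: "0 < k" and k2: "k\<^sup>2 = 2/27" using k_def by auto
  define a1 where "a1 = \<alpha> * sqrt w0 + \<beta> * sqrt w2"
  define d where "d = \<delta> * sqrt w1"
  define b2 where "b2 = \<gamma>\<^sup>2*(1-w0)"
  define G where "G = sqrt (a1\<^sup>2 + b2)"
  have a10: "0 \<le> a1" using a1_def a0 b0 w0 w2 by simp
  have dd0: "0 \<le> d" using d_def d0 w1 by simp
  have w0le: "w0 \<le> 1" using ws w1 w2 by simp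
  have b20: "0 \<le> b2" using b2_def w0le by simp
  have w1le: "w1 \<le> 1" using ws w0 w2 by simp
  have bg: "\<beta>\<^sup>2+\<gamma>\<^sup>2 \<le> 1/3 - c" using nrm asq zero_le_power2[of \<delta>] by linarith
  have M: "a1\<^sup>2 + b2 \<le> (\<alpha> - c*w1/(4*k))\<^sup>2"
    unfolding a1_def b2_def by (rule main_real[OF a0 b0 g0 bg asq c0 w0 w1 w2 ws C k_def])
  have c13: "c \<le> 1/3" using bg by (smt (verit) zero_le_power2)
  have pos: "c*w1/(4*k) \<le> \<alpha>"
  proof -
    have "c*w1 \<le> 1/3" using c13 w1le c0 w1 mult_mono[of c "1/3" w1 1] by simp
    then have "c*w1/(4*k) \<le> (1/3)/(4*k)" by (rule divide_right_mono) (use k0 in simp)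
    also have "(1/3)/(4*k) \<le> \<alpha>"
    proof -
      have "((1/3)/(4*k))\<^sup>2 = 27/(9*16*2)" by (simp add: power_divide power_mult_distrib k2)
      also have "\<dots> \<le> \<alpha>\<^sup>2" using asq c0 by simp
      finally show ?thesis using a0 power2_le_imp_le by blast
    qed
    finally show ?thesis .
  qed
  have cw0: "0 \<le> c*w1/(4*k)" using c0 w1 k0 by simp
  have GM: "G \<le> \<alpha> - c*w1/(4*k)"
    unfolding G_def using M pos real_le_lsqrt real_sqrt_le_mono
    by (metis diff_ge_0_iff_ge real_sqrt_abs abs_of_nonneg)
  have Ga: "a1 \<le> G" unfolding G_def using a10 b20 real_le_rsqrt by simp
  have G0: "0 \<le> G" using Ga a10 by simp
  have G2: "G\<^sup>2 = a1\<^sup>2 + b2" unfolding G_def using a10 b20 by simp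
  have step1: "X\<^sup>2 + \<gamma>\<^sup>2*Y \<le> (a1+d)\<^sup>2 + b2"
  proof -
    have "X \<le> a1 + d" using Xb a1_def d_def by simp
    then have "X\<^sup>2 \<le> (a1+d)\<^sup>2" using X0 power_mono by blast
    moreover have "\<gamma>\<^sup>2*Y \<le> b2" unfolding b2_def using Yb by (simp add: mult_left_mono)
    ultimately show ?thesis by simp
  qed
  have step2: "(a1+d)\<^sup>2 + b2 \<le> (G+d)\<^sup>2"
  proof -
    have "a1*d \<le> G*d" using Ga dd0 mult_right_mono by blast
    then show ?thesis using G2 by (simp add: power2_sum)
  qed
  define m where "m = (if c = 0 then \<delta> else min \<delta> (sqrt (2/27) * \<delta>\<^sup>2 / c))"
  have sw1: "sqrt w1 \<le> 1" using w1le by simp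
  have dle: "d \<le> \<delta>" using d_def sw1 d0 mult_left_mono[OF sw1 d0] by simp
  have Gle: "G \<le> \<alpha>" using GM cw0 by simp
  have step3: "G + d \<le> \<alpha> + m"
  proof (cases "c = 0")
    case True
    then show ?thesis using m_def Gle dle by simp
  next
    case False
    then have cp: "0 < c" using c0 by simp
    have "d \<le> k*\<delta>\<^sup>2/c + c*w1/(4*k)"
    proof -
      define y where "y = sqrt w1"
      have y2: "y\<^sup>2 = w1" using y_def w1 by simp
      have "0 \<le> (2*k*\<delta> - c*y)\<^sup>2" by simp
      then have "4*k*c*(\<delta>*y) \<le> 4*k\<^sup>2*\<delta>\<^sup>2 + c\<^sup>2*y\<^sup>2" by (simp add: power2_diff algebra_simps power_mult_distrib)
      moreover have "(4*k*c)*(k*\<delta>\<^sup>2/c + c*w1/(4*k)) = 4*k\<^sup>2*\<delta>\<^sup>2 + c\<^sup>2*y\<^sup>2"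
        using k0 cp y2 by (simp add: field_simps power2_eq_square)
      ultimately have "(4*k*c)*(\<delta>*y) \<le> (4*k*c)*(k*\<delta>\<^sup>2/c + c*w1/(4*k))"
        by (simp add: algebra_simps)
      then have "\<delta>*y \<le> k*\<delta>\<^sup>2/c + c*w1/(4*k)" using k0 cp by (simp add: mult_le_cancel_left_pos)
      then show ?thesis using d_def y_def by simp
    qed
    then have "G + d \<le> \<alpha> + k*\<delta>\<^sup>2/c" using GM by simp
    moreover have "G + d \<le> \<alpha> + \<delta>" using Gle dle by simp
    ultimately show ?thesis using m_def False k_def by simp
  qed
  have "(G+d)\<^sup>2 \<le> (\<alpha>+m)\<^sup>2" using step3 G0 dd0 power_mono by (metis add_nonneg_nonneg)
  then show ?thesis using step1 step2 m_def by simp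
qed



lemma finite_strs[simp]: "finite (strs n)"
  unfolding strs_def using finite_lists_length_eq[of "UNIV::bool set" n] by simp

lemma strs_0: "strs 0 = {[]}" unfolding strs_def by auto

lemma strs_Suc: "strs (Suc n) = (\<lambda>ys. ys@[False]) ` strs n \<union> (\<lambda>ys. ys@[True]) ` strs n"
proof (rule set_eqI)
  fix xs
  show "xs \<in> strs (Suc n) \<longleftrightarrow> xs \<in> (\<lambda>ys. ys@[False]) ` strs n \<union> (\<lambda>ys. ys@[True]) ` strs n"
  proof (cases xs rule: rev_cases)
    case Nil then show ?thesis by (auto simp: strs_def)
  next
    case (snoc ys b)
    then show ?thesis by (cases b) (auto simp: strs_def)
  qed
qed

lemma sum_strs_Suc:
  "(\<Sum>xs\<in>strs (Suc n). f xs) = (\<Sum>ys\<in>strs n. f (ys@[False]) + f (ys@[True]))"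
proof -
  have inj: "inj_on (\<lambda>ys. ys@[b]) A" for b :: bool and A by (simp add: inj_on_def)
  have disj: "(\<lambda>ys. ys@[False]) ` strs n \<inter> (\<lambda>ys. ys@[True]) ` strs n = {}" by auto
  have "(\<Sum>xs\<in>strs (Suc n). f xs) = (\<Sum>xs\<in>(\<lambda>ys. ys@[False]) ` strs n. f xs) + (\<Sum>xs\<in>(\<lambda>ys. ys@[True]) ` strs n. f xs)"
    unfolding strs_Suc by (rule sum.union_disjoint) (use disj in auto)
  also have "\<dots> = (\<Sum>ys\<in>strs n. f (ys@[False])) + (\<Sum>ys\<in>strs n. f (ys@[True]))"
    by (simp add: sum.reindex[OF inj])
  finally show ?thesis by (simp add: sum.distrib)
qed

lemma prod_state_snoc:
  assumes "length ys = n"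
  shows "prod_state (Suc n) p (ys@[b]) = prod_state n p ys * p n b"
proof -
  have "(\<Prod>k<n. p k ((ys@[b]) ! k)) = (\<Prod>k<n. p k (ys ! k))"
    by (rule prod.cong) (use assms in \<open>auto simp: nth_append\<close>)
  moreover have "(ys@[b]) ! n = b" using assms nth_append_length[of ys b] by simp
  ultimately show ?thesis using assms unfolding prod_state_def by (simp add: prod.lessThan_Suc)
qed

lemma hw_snoc: "hamming_weight (ys@[b]) = hamming_weight ys + (if b then 1 else 0)"
  by (simp add: hamming_weight_def)

lemma hw0: "hamming_weight xs = 0 \<Longrightarrow> xs = replicate (length xs) False"
  by (induction xs) (auto simp: hamming_weight_def split: if_splits)

lemma hw_rep[simp]: "hamming_weight (replicate n False) = 0"
  by (induction n) (auto simp: hamming_weight_def)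

lemma rep_strs[simp]: "replicate n False \<in> strs n" by (simp add: strs_def)

definition qq :: "(nat \<Rightarrow> bool \<Rightarrow> complex) \<Rightarrow> nat \<Rightarrow> bool list \<Rightarrow> real" where
  "qq p n xs = (cmod (prod_state n p xs))\<^sup>2"

definition Wsum :: "(nat \<Rightarrow> bool \<Rightarrow> complex) \<Rightarrow> nat \<Rightarrow> (nat \<Rightarrow> bool) \<Rightarrow> real" where
  "Wsum p n P = (\<Sum>xs\<in>strs n. if P (hamming_weight xs) then qq p n xs else 0)"

lemma Wsum_nonneg: "0 \<le> Wsum p n P"
  unfolding Wsum_def qq_def by (rule sum_nonneg) simp

lemma Wsum_Suc:
  "Wsum p (Suc n) P = (cmod (p n False))\<^sup>2 * Wsum p n P + (cmod (p n True))\<^sup>2 * Wsum p n (\<lambda>h. P (Suc h))"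
proof -
  have "Wsum p (Suc n) P = (\<Sum>ys\<in>strs n. (cmod (p n False))\<^sup>2 * (if P (hamming_weight ys) then qq p n ys else 0)
        + (cmod (p n True))\<^sup>2 * (if P (Suc (hamming_weight ys)) then qq p n ys else 0))"
    unfolding Wsum_def sum_strs_Suc
    by (rule sum.cong) (auto simp: strs_def qq_def prod_state_snoc hw_snoc norm_mult power_mult_distrib)
  then show ?thesis by (simp add: sum.distrib sum_distrib_left Wsum_def)
qed

lemma Wsum_disj:
  assumes "\<And>h. \<not> (P h \<and> Q h)"
  shows "Wsum p n (\<lambda>h. P h \<or> Q h) = Wsum p n P + Wsum p n Q"
  unfolding Wsum_def sum.distrib[symmetric] by (rule sum.cong) (use assms in auto)

lemma Wsum_False: "Wsum p n (\<lambda>h. False) = 0" by (simp add: Wsum_def)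

lemma inv_step:
  fixes a b w0 w1 w2 :: real
  assumes "0 \<le> a" "0 \<le> b" "0 \<le> w0" "0 \<le> w1" "0 \<le> w2" and C: "w2*(2*w0-w1) \<le> w1\<^sup>2"
  shows "(a*w2 + b*(w1+w2))*(2*(a*w0) - (a*w1+b*w0)) \<le> (a*w1+b*w0)\<^sup>2"
proof -
  have e: "(a*w1+b*w0)\<^sup>2 - (a*w2 + b*(w1+w2))*(2*(a*w0) - (a*w1+b*w0))
     = a\<^sup>2*(w1\<^sup>2 - w2*(2*w0-w1)) + a*b*(w1\<^sup>2 + w1*w2 - w0*w2) + b\<^sup>2*((w1+w2)*w0 + w0\<^sup>2)"
    by (simp add: algebra_simps power2_eq_square)
  have t1: "0 \<le> a\<^sup>2*(w1\<^sup>2 - w2*(2*w0-w1))" using C by simp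
  have "0 \<le> w0*w2" using assms by simp
  then have "w0*w2 \<le> w1\<^sup>2 + w1*w2" using C by (simp add: algebra_simps)
  then have t2: "0 \<le> a*b*(w1\<^sup>2 + w1*w2 - w0*w2)" using assms by simp
  have t3: "0 \<le> b\<^sup>2*((w1+w2)*w0 + w0\<^sup>2)" using assms by simp
  show ?thesis using e t1 t2 t3 by linarith
qed

abbreviation "W0 p n \<equiv> Wsum p n (\<lambda>h. h = 0)"
abbreviation "W1 p n \<equiv> Wsum p n (\<lambda>h. h = 1)"
abbreviation "W2 p n \<equiv> Wsum p n (\<lambda>h. 2 \<le> h)"

lemma W_Suc:
  "W0 p (Suc n) = (cmod (p n False))\<^sup>2 * W0 p n"
  "W1 p (Suc n) = (cmod (p n False))\<^sup>2 * W1 p n + (cmod (p n True))\<^sup>2 * W0 p n"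
  "W2 p (Suc n) = (cmod (p n False))\<^sup>2 * W2 p n + (cmod (p n True))\<^sup>2 * (W1 p n + W2 p n)"
proof -
  show "W0 p (Suc n) = (cmod (p n False))\<^sup>2 * W0 p n" by (simp add: Wsum_Suc Wsum_False)
  show "W1 p (Suc n) = (cmod (p n False))\<^sup>2 * W1 p n + (cmod (p n True))\<^sup>2 * W0 p n" by (simp add: Wsum_Suc)
  have "(\<lambda>h. 2 \<le> Suc h) = (\<lambda>h. h = 1 \<or> 2 \<le> h)" by (auto simp: fun_eq_iff)
  then have "Wsum p n (\<lambda>h. 2 \<le> Suc h) = W1 p n + W2 p n" using Wsum_disj[of "\<lambda>h. h = 1" "\<lambda>h. 2 \<le> h" p n] by simp
  then show "W2 p (Suc n) = (cmod (p n False))\<^sup>2 * W2 p n + (cmod (p n True))\<^sup>2 * (W1 p n + W2 p n)"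
    by (simp add: Wsum_Suc)
qed

lemma W_inv: "W2 p n * (2 * W0 p n - W1 p n) \<le> (W1 p n)\<^sup>2"
proof (induction n)
  case 0
  have "W2 p 0 = 0" by (simp add: Wsum_def strs_0 hamming_weight_def)
  then show ?case by simp
next
  case (Suc n)
  show ?case unfolding W_Suc
    by (rule inv_step[OF _ _ Wsum_nonneg Wsum_nonneg Wsum_nonneg Suc.IH]) simp_all
qed

lemma W_tot: assumes "\<forall>k<n. (cmod (p k False))\<^sup>2 + (cmod (p k True))\<^sup>2 = 1"
  shows "Wsum p n (\<lambda>h. True) = 1"
  using assms
proof (induction n)
  case 0
  then show ?case by (simp add: Wsum_def strs_0 qq_def prod_state_def)
next
  case (Suc n)
  then have "(cmod (p n False))\<^sup>2 + (cmod (p n True))\<^sup>2 = 1" by simp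
  moreover have "Wsum p n (\<lambda>h. True) = 1" using Suc by simp
  ultimately show ?case by (simp add: Wsum_Suc algebra_simps)
qed

lemma W_split: "Wsum p n (\<lambda>h. True) = W0 p n + W1 p n + W2 p n"
proof -
  have "(\<lambda>h::nat. True) = (\<lambda>h. (h = 0 \<or> h = 1) \<or> 2 \<le> h)" by (auto simp: fun_eq_iff)
  moreover have "Wsum p n (\<lambda>h. (h = 0 \<or> h = 1) \<or> 2 \<le> h) = Wsum p n (\<lambda>h. h = 0 \<or> h = 1) + W2 p n"
    by (rule Wsum_disj) auto
  moreover have "Wsum p n (\<lambda>h. h = 0 \<or> h = 1) = W0 p n + W1 p n"
    by (rule Wsum_disj) auto
  ultimately show ?thesis by simp
qed

lemma W_ge1: "Wsum p n (\<lambda>h. 1 \<le> h) = W1 p n + W2 p n"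
proof -
  have "(\<lambda>h::nat. 1 \<le> h) = (\<lambda>h. h = 1 \<or> 2 \<le> h)" by (auto simp: fun_eq_iff)
  then show ?thesis using Wsum_disj[of "\<lambda>h. h = 1" "\<lambda>h. 2 \<le> h" p n] by simp
qed

lemma Wsum_filter: "Wsum p n P = (\<Sum>xs\<in>{xs\<in>strs n. P (hamming_weight xs)}. (cmod (prod_state n p xs))\<^sup>2)"
  unfolding Wsum_def qq_def by (simp add: sum.inter_filter)

lemma cnj_self: "cnj z * z = complex_of_real ((cmod z)\<^sup>2)"
  using complex_norm_square[of z] by (simp add: mult.commute)

lemma sum_cnj_self: "(\<Sum>x\<in>A. cnj (u x) * u x) = complex_of_real (\<Sum>x\<in>A. (cmod (u x))\<^sup>2)"
  by (simp add: cnj_self)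

lemma sum_cnj_self2: "(\<Sum>x\<in>A. \<Sum>i\<in>B. cnj (u x i) * u x i) = complex_of_real (\<Sum>x\<in>A. \<Sum>i\<in>B. (cmod (u x i))\<^sup>2)"
  by (simp add: cnj_self)

lemma cs_supp:
  fixes u v :: "'a \<Rightarrow> complex"
  assumes fA: "finite A" and BA: "B \<subseteq> A" and sp: "\<forall>x\<in>A. v x \<noteq> 0 \<longrightarrow> x \<in> B"
  shows "(cmod (\<Sum>x\<in>A. cnj (u x) * v x))\<^sup>2 \<le> (\<Sum>x\<in>B. (cmod (u x))\<^sup>2) * (\<Sum>x\<in>A. (cmod (v x))\<^sup>2)"
proof -
  have fB: "finite B" using fA BA finite_subset by blast
  have eq: "(\<Sum>x\<in>A. cnj (u x) * v x) = (\<Sum>x\<in>B. cnj (u x) * v x)"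
    by (rule sum.mono_neutral_right[OF fA BA]) (use sp in auto)
  have n1: "cmod (\<Sum>x\<in>B. cnj (u x) * v x) \<le> (\<Sum>x\<in>B. cmod (u x) * cmod (v x))"
    by (rule order_trans[OF norm_sum]) (simp add: norm_mult)
  have "(cmod (\<Sum>x\<in>B. cnj (u x) * v x))\<^sup>2 \<le> (\<Sum>x\<in>B. cmod (u x) * cmod (v x))\<^sup>2"
    by (rule power_mono[OF n1]) simp
  also have "\<dots> \<le> (\<Sum>x\<in>B. (cmod (u x))\<^sup>2) * (\<Sum>x\<in>B. (cmod (v x))\<^sup>2)"
    by (rule Cauchy_Schwarz_ineq_sum)
  also have "\<dots> \<le> (\<Sum>x\<in>B. (cmod (u x))\<^sup>2) * (\<Sum>x\<in>A. (cmod (v x))\<^sup>2)"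
    by (rule mult_left_mono) (auto intro: sum_mono2[OF fA BA] sum_nonneg)
  finally show ?thesis using eq by simp
qed

lemma cs_sqrt:
  fixes u v :: "'a \<Rightarrow> complex"
  assumes fA: "finite A" and BA: "B \<subseteq> A" and sp: "\<forall>x\<in>A. v x \<noteq> 0 \<longrightarrow> x \<in> B"
    and n: "(\<Sum>x\<in>A. (cmod (v x))\<^sup>2) = 1"
  shows "cmod (\<Sum>x\<in>A. cnj (u x) * v x) \<le> sqrt (\<Sum>x\<in>B. (cmod (u x))\<^sup>2)"
  by (rule real_le_rsqrt) (use cs_supp[OF fA BA sp, of u] n in simp)

lemma cmod_add_sq: "(cmod (a + b))\<^sup>2 = (cmod a)\<^sup>2 + (cmod b)\<^sup>2 + 2 * Re (cnj a * b)"
  unfolding cmod_power2 by (simp add: power2_eq_square algebra_simps)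

lemma pyth:
  fixes g w :: "'h::finite \<Rightarrow> complex"
  assumes o: "(\<Sum>i\<in>UNIV. cnj (g i) * w i) = 0"
  shows "(\<Sum>i\<in>UNIV. (cmod (z * g i + complex_of_real \<gamma> * w i))\<^sup>2)
     = (cmod z)\<^sup>2 * (\<Sum>i\<in>UNIV. (cmod (g i))\<^sup>2) + \<gamma>\<^sup>2 * (\<Sum>i\<in>UNIV. (cmod (w i))\<^sup>2)"
proof -
  have pt: "(cmod (z * g i + complex_of_real \<gamma> * w i))\<^sup>2 = (cmod z)\<^sup>2 * (cmod (g i))\<^sup>2 + \<gamma>\<^sup>2 * (cmod (w i))\<^sup>2
      + 2 * Re ((cnj z * complex_of_real \<gamma>) * (cnj (g i) * w i))" for i
    unfolding cmod_add_sq by (simp add: norm_mult power_mult_distrib algebra_simps)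
  have r: "(\<Sum>i\<in>UNIV. Re ((cnj z * complex_of_real \<gamma>) * (cnj (g i) * w i))) = 0"
  proof -
    have "(\<Sum>i\<in>UNIV. Re ((cnj z * complex_of_real \<gamma>) * (cnj (g i) * w i)))
        = Re ((cnj z * complex_of_real \<gamma>) * (\<Sum>i\<in>UNIV. cnj (g i) * w i))"
      by (simp only: sum_distrib_left Re_sum)
    then show ?thesis using o by simp
  qed
  have "(\<Sum>i\<in>UNIV. (cmod (z * g i + complex_of_real \<gamma> * w i))\<^sup>2)
     = (\<Sum>i\<in>UNIV. (cmod z)\<^sup>2 * (cmod (g i))\<^sup>2) + (\<Sum>i\<in>UNIV. \<gamma>\<^sup>2 * (cmod (w i))\<^sup>2)
       + 2 * (\<Sum>i\<in>UNIV. Re ((cnj z * complex_of_real \<gamma>) * (cnj (g i) * w i)))"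
    unfolding pt by (simp only: sum.distrib sum_distrib_left)
  also have "\<dots> = (\<Sum>i\<in>UNIV. (cmod z)\<^sup>2 * (cmod (g i))\<^sup>2) + (\<Sum>i\<in>UNIV. \<gamma>\<^sup>2 * (cmod (w i))\<^sup>2) + 2 * 0"
    unfolding r ..
  finally show ?thesis by (simp add: sum_distrib_left)
qed

lemma ip_tensor: "ip_j n (tensor x h) w = (\<Sum>xs\<in>strs n. cnj (x xs) * (\<Sum>i\<in>UNIV. cnj (h i) * w xs i))"
  unfolding ip_j_def tensor_def by (simp add: sum_distrib_left mult.assoc)

lemma sum_ind: "finite A \<Longrightarrow> (\<Sum>xs\<in>A. cnj (if xs = ys then 1 else 0) * f xs) = (if ys \<in> A then f ys else (0::complex))"
proof -
  assume fA: "finite A"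
  have "(\<Sum>xs\<in>A. cnj (if xs = ys then 1 else 0) * f xs) = (\<Sum>xs\<in>A. if xs = ys then f xs else 0)"
    by (rule sum.cong) auto
  then show ?thesis using fA by (simp add: sum.delta)
qed

theorem theorem4p4:
  fixes n :: nat
    and \<alpha> \<beta> \<delta> \<gamma> c :: real
    and v1 v2 :: "bool list \<Rightarrow> complex"
    and g :: "'h::finite \<Rightarrow> complex"
    and perp psi :: "bool list \<Rightarrow> 'h \<Rightarrow> complex"
    and p :: "nat \<Rightarrow> bool \<Rightarrow> complex"
  assumes nonneg: "\<alpha> \<ge> 0" "\<beta> \<ge> 0" "\<delta> \<ge> 0" "\<gamma> \<ge> 0"
    and v1_supp: "\<forall>xs. v1 xs \<noteq> 0 \<longrightarrow> length xs = n \<and> hamming_weight xs = 1"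
    and v2_supp: "\<forall>xs. v2 xs \<noteq> 0 \<longrightarrow> length xs = n \<and> hamming_weight xs \<ge> 2"
    and v1_unit: "ip_q n v1 v1 = 1"
    and v2_unit: "ip_q n v2 v2 = 1"
    and g_unit: "ip_h g g = 1"
    and perp_supp: "jsupp n perp"
    and perp_unit: "ip_j n perp perp = 1"
    and perp_orth0: "\<forall>h. ip_j n (tensor (ket0 n) h) perp = 0"
    and perp_orthg: "\<forall>x. ip_j n (tensor x g) perp = 0"
    and psi_def: "psi = (\<lambda>xs i. tensor (\<lambda>ys. complex_of_real \<alpha> * ket0 n ys
                     + complex_of_real \<delta> * v1 ys + complex_of_real \<beta> * v2 ys) g xs i
                     + complex_of_real \<gamma> * perp xs i)"
    and psi_unit: "ip_j n psi psi = 1"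
    and alpha_sq: "\<alpha>\<^sup>2 = 2/3 + c"
    and c_nonneg: "c \<ge> 0"
    and p_unit: "\<forall>k<n. (cmod (p k False))\<^sup>2 + (cmod (p k True))\<^sup>2 = 1"
  shows "hnorm2 (partial_bra n (prod_state n p) psi)
           \<le> (\<alpha> + (if c = 0 then \<delta> else min \<delta> (sqrt (2/27) * \<delta>\<^sup>2 / c)))\<^sup>2"
proof -
  define \<pi> where "\<pi> = prod_state n p"
  define \<phi> where "\<phi> = (\<lambda>ys. complex_of_real \<alpha> * ket0 n ys + complex_of_real \<delta> * v1 ys + complex_of_real \<beta> * v2 ys)"
  have psi_eq: "psi xs i = \<phi> xs * g i + complex_of_real \<gamma> * perp xs i" for xs i
    unfolding psi_def \<phi>_def tensor_def by simp
  define \<Phi> where "\<Phi> = (\<Sum>xs\<in>strs n. cnj (\<pi> xs) * \<phi> xs)"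
  define P where "P = (\<lambda>i. \<Sum>xs\<in>strs n. cnj (\<pi> xs) * perp xs i)"
  have pb: "partial_bra n \<pi> psi = (\<lambda>i. \<Phi> * g i + complex_of_real \<gamma> * P i)"
    unfolding partial_bra_def \<Phi>_def P_def psi_eq
    by (simp add: sum_distrib_left sum_distrib_right sum.distrib algebra_simps)
  have orth_xs: "(\<Sum>i\<in>UNIV. cnj (g i) * perp ys i) = 0" if "ys \<in> strs n" for ys
  proof -
    have "ip_j n (tensor (\<lambda>zs. if zs = ys then 1 else 0) g) perp = 0" using perp_orthg by blast
    then show ?thesis unfolding ip_tensor using sum_ind[of "strs n" ys] that by simp
  qed
  have perp0: "perp (replicate n False) i = 0" for i
  proof -
    have "ip_j n (tensor (ket0 n) (\<lambda>j. if j = i then 1 else 0)) perp = 0" using perp_orth0 by blast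
    then show ?thesis unfolding ip_tensor ket0_def
      using sum_ind[of "UNIV::'h set" i] sum_ind[of "strs n" "replicate n False"] by simp
  qed
  have P_orth: "(\<Sum>i\<in>UNIV. cnj (g i) * P i) = 0"
  proof -
    have "(\<Sum>i\<in>UNIV. cnj (g i) * P i) = (\<Sum>i\<in>UNIV. \<Sum>xs\<in>strs n. cnj (\<pi> xs) * (cnj (g i) * perp xs i))"
      unfolding P_def sum_distrib_left by (simp add: algebra_simps)
    also have "\<dots> = (\<Sum>xs\<in>strs n. \<Sum>i\<in>UNIV. cnj (\<pi> xs) * (cnj (g i) * perp xs i))"
      by (rule sum.swap)
    also have "\<dots> = (\<Sum>xs\<in>strs n. cnj (\<pi> xs) * (\<Sum>i\<in>UNIV. cnj (g i) * perp xs i))"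
      by (simp add: sum_distrib_left)
    also have "\<dots> = 0" using orth_xs by simp
    finally show ?thesis .
  qed
  have gnorm: "(\<Sum>i\<in>UNIV. (cmod (g i))\<^sup>2) = 1"
    using g_unit unfolding ip_h_def sum_cnj_self by (simp only: of_real_eq_1_iff)
  have perpnorm: "(\<Sum>xs\<in>strs n. \<Sum>i\<in>UNIV. (cmod (perp xs i))\<^sup>2) = 1"
  proof -
    have "complex_of_real (\<Sum>xs\<in>strs n. \<Sum>i\<in>UNIV. (cmod (perp xs i))\<^sup>2) = 1"
      using perp_unit unfolding ip_j_def sum_cnj_self2 .
    then show ?thesis by (simp only: of_real_eq_1_iff)
  qed
  have v1norm: "(\<Sum>xs\<in>strs n. (cmod (v1 xs))\<^sup>2) = 1"
    using v1_unit unfolding ip_q_def sum_cnj_self by (simp only: of_real_eq_1_iff)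
  have v2norm: "(\<Sum>xs\<in>strs n. (cmod (v2 xs))\<^sup>2) = 1"
    using v2_unit unfolding ip_q_def sum_cnj_self by (simp only: of_real_eq_1_iff)
  have k0norm: "(\<Sum>xs\<in>strs n. (cmod (ket0 n xs))\<^sup>2) = 1"
  proof -
    have "(\<Sum>xs\<in>strs n. (cmod (ket0 n xs))\<^sup>2) = (\<Sum>xs\<in>strs n. if xs = replicate n False then 1 else 0)"
      by (rule sum.cong) (auto simp: ket0_def)
    then show ?thesis by (simp add: sum.delta)
  qed
  have hn: "hnorm2 (partial_bra n (prod_state n p) psi) = (cmod \<Phi>)\<^sup>2 + \<gamma>\<^sup>2 * (\<Sum>i\<in>UNIV. (cmod (P i))\<^sup>2)"
    unfolding \<pi>_def[symmetric] pb hnorm2_def pyth[OF P_orth] gnorm by simp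
  define w0 where "w0 = W0 p n"
  define w1 where "w1 = W1 p n"
  define w2 where "w2 = W2 p n"
  have w0n: "0 \<le> w0" and w1n: "0 \<le> w1" and w2n: "0 \<le> w2" unfolding w0_def w1_def w2_def by (simp_all add: Wsum_nonneg)
  have ws: "w0 + w1 + w2 = 1" unfolding w0_def w1_def w2_def using W_tot[OF p_unit] W_split by simp
  have C: "w2*(2*w0-w1) \<le> w1\<^sup>2" unfolding w0_def w1_def w2_def by (rule W_inv)
  have sB: "{xs\<in>strs n. Q (hamming_weight xs)} \<subseteq> strs n" for Q by auto
  define K where "K = (\<Sum>xs\<in>strs n. cnj (\<pi> xs) * ket0 n xs)"
  define V1 where "V1 = (\<Sum>xs\<in>strs n. cnj (\<pi> xs) * v1 xs)"
  define V2 where "V2 = (\<Sum>xs\<in>strs n. cnj (\<pi> xs) * v2 xs)"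
  have Phi_eq: "\<Phi> = complex_of_real \<alpha> * K + complex_of_real \<delta> * V1 + complex_of_real \<beta> * V2"
    unfolding \<Phi>_def \<phi>_def K_def V1_def V2_def by (simp add: sum_distrib_left sum.distrib algebra_simps)
  have Kb: "cmod K \<le> sqrt w0"
  proof -
    have "cmod K \<le> sqrt (\<Sum>xs\<in>{xs\<in>strs n. hamming_weight xs = 0}. (cmod (\<pi> xs))\<^sup>2)"
      unfolding K_def by (rule cs_sqrt[OF finite_strs sB _ k0norm]) (auto simp: ket0_def)
    then show ?thesis unfolding w0_def Wsum_filter \<pi>_def .
  qed
  have V1b: "cmod V1 \<le> sqrt w1"
  proof -
    have "cmod V1 \<le> sqrt (\<Sum>xs\<in>{xs\<in>strs n. hamming_weight xs = 1}. (cmod (\<pi> xs))\<^sup>2)"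
      unfolding V1_def by (rule cs_sqrt[OF finite_strs sB _ v1norm]) (use v1_supp in \<open>auto simp: strs_def\<close>)
    then show ?thesis unfolding w1_def Wsum_filter \<pi>_def .
  qed
  have V2b: "cmod V2 \<le> sqrt w2"
  proof -
    have "cmod V2 \<le> sqrt (\<Sum>xs\<in>{xs\<in>strs n. 2 \<le> hamming_weight xs}. (cmod (\<pi> xs))\<^sup>2)"
      unfolding V2_def by (rule cs_sqrt[OF finite_strs sB _ v2norm]) (use v2_supp in \<open>auto simp: strs_def\<close>)
    then show ?thesis unfolding w2_def Wsum_filter \<pi>_def .
  qed
  have Phib: "cmod \<Phi> \<le> \<alpha> * sqrt w0 + \<delta> * sqrt w1 + \<beta> * sqrt w2"
  proof -
    have "cmod \<Phi> \<le> cmod (complex_of_real \<alpha> * K) + cmod (complex_of_real \<delta> * V1) + cmod (complex_of_real \<beta> * V2)"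
      unfolding Phi_eq by (metis norm_triangle_ineq order_trans add_right_mono)
    also have "\<dots> = \<alpha> * cmod K + \<delta> * cmod V1 + \<beta> * cmod V2"
      using nonneg by (simp add: norm_mult)
    also have "\<dots> \<le> \<alpha> * sqrt w0 + \<delta> * sqrt w1 + \<beta> * sqrt w2"
      using nonneg Kb V1b V2b by (intro add_mono mult_left_mono) auto
    finally show ?thesis .
  qed
  have Pi: "(cmod (P i))\<^sup>2 \<le> Wsum p n (\<lambda>h. 1 \<le> h) * (\<Sum>xs\<in>strs n. (cmod (perp xs i))\<^sup>2)" for i
  proof -
    have sp: "\<forall>xs\<in>strs n. perp xs i \<noteq> 0 \<longrightarrow> xs \<in> {xs\<in>strs n. 1 \<le> hamming_weight xs}"
    proof (intro ballI impI)
      fix xs assume xs: "xs \<in> strs n" and nz: "perp xs i \<noteq> 0"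
      have "hamming_weight xs \<noteq> 0"
      proof
        assume "hamming_weight xs = 0"
        then have "xs = replicate n False" using hw0[of xs] xs unfolding strs_def by simp
        then show False using nz perp0 by simp
      qed
      then show "xs \<in> {xs\<in>strs n. 1 \<le> hamming_weight xs}" using xs by simp
    qed
    show ?thesis unfolding P_def Wsum_filter \<pi>_def[symmetric]
      by (rule cs_supp[OF finite_strs sB sp])
  qed
  have Pb: "(\<Sum>i\<in>UNIV. (cmod (P i))\<^sup>2) \<le> 1 - w0"
  proof -
    have "(\<Sum>i\<in>UNIV. (cmod (P i))\<^sup>2) \<le> (\<Sum>i\<in>UNIV. Wsum p n (\<lambda>h. 1 \<le> h) * (\<Sum>xs\<in>strs n. (cmod (perp xs i))\<^sup>2))"
      by (rule sum_mono) (rule Pi)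
    also have "\<dots> = Wsum p n (\<lambda>h. 1 \<le> h) * (\<Sum>xs\<in>strs n. \<Sum>i\<in>UNIV. (cmod (perp xs i))\<^sup>2)"
      by (simp add: sum_distrib_left sum.swap[of _ "UNIV::'h set"])
    also have "\<dots> = 1 - w0" unfolding perpnorm W_ge1 using ws w1_def w2_def by simp
    finally show ?thesis .
  qed
  have phipt: "(cmod (\<phi> xs))\<^sup>2 = \<alpha>\<^sup>2 * (cmod (ket0 n xs))\<^sup>2 + \<delta>\<^sup>2 * (cmod (v1 xs))\<^sup>2 + \<beta>\<^sup>2 * (cmod (v2 xs))\<^sup>2" for xs
  proof (cases "xs = replicate n False")
    case True
    then have "v1 xs = 0" "v2 xs = 0" using v1_supp v2_supp by auto
    then show ?thesis using True by (simp add: \<phi>_def ket0_def norm_mult power_mult_distrib)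
  next
    case False
    then have k: "ket0 n xs = 0" by (simp add: ket0_def)
    show ?thesis
    proof (cases "v1 xs = 0")
      case True
      then show ?thesis using k by (simp add: \<phi>_def norm_mult power_mult_distrib)
    next
      case F2: False
      then have "v2 xs = 0" using v1_supp v2_supp by fastforce
      then show ?thesis using k by (simp add: \<phi>_def norm_mult power_mult_distrib)
    qed
  qed
  have nrm: "\<alpha>\<^sup>2+\<beta>\<^sup>2+\<gamma>\<^sup>2+\<delta>\<^sup>2 = 1"
  proof -
    have "complex_of_real (\<Sum>xs\<in>strs n. \<Sum>i\<in>UNIV. (cmod (psi xs i))\<^sup>2) = 1"
      using psi_unit unfolding ip_j_def sum_cnj_self2 .
    then have a: "(\<Sum>xs\<in>strs n. \<Sum>i\<in>UNIV. (cmod (psi xs i))\<^sup>2) = 1" by (simp only: of_real_eq_1_iff)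
    have "(\<Sum>xs\<in>strs n. \<Sum>i\<in>UNIV. (cmod (psi xs i))\<^sup>2)
        = (\<Sum>xs\<in>strs n. (cmod (\<phi> xs))\<^sup>2 + \<gamma>\<^sup>2 * (\<Sum>i\<in>UNIV. (cmod (perp xs i))\<^sup>2))"
      unfolding psi_eq by (rule sum.cong) (simp_all add: pyth[OF orth_xs] gnorm)
    also have "\<dots> = \<alpha>\<^sup>2 * (\<Sum>xs\<in>strs n. (cmod (ket0 n xs))\<^sup>2) + \<delta>\<^sup>2 * (\<Sum>xs\<in>strs n. (cmod (v1 xs))\<^sup>2)
        + \<beta>\<^sup>2 * (\<Sum>xs\<in>strs n. (cmod (v2 xs))\<^sup>2) + \<gamma>\<^sup>2 * (\<Sum>xs\<in>strs n. \<Sum>i\<in>UNIV. (cmod (perp xs i))\<^sup>2)"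
      unfolding phipt by (simp add: sum.distrib sum_distrib_left)
    also have "\<dots> = \<alpha>\<^sup>2 + \<delta>\<^sup>2 + \<beta>\<^sup>2 + \<gamma>\<^sup>2" unfolding k0norm v1norm v2norm perpnorm by simp
    finally show ?thesis using a by simp
  qed
  have "(cmod \<Phi>)\<^sup>2 + \<gamma>\<^sup>2 * (\<Sum>i\<in>UNIV. (cmod (P i))\<^sup>2)
     \<le> (\<alpha> + (if c = 0 then \<delta> else min \<delta> (sqrt (2/27) * \<delta>\<^sup>2 / c)))\<^sup>2"
    by (rule final_real[OF nonneg(1) nonneg(2) nonneg(4) nonneg(3) nrm alpha_sq c_nonneg w0n w1n w2n ws C _ Phib Pb]) simp
  then show ?thesis unfolding hn .
qed


end
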